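(* Let $w_1,w_2,\dots\in F$ be arbitrary, set $w_0=1$, and define $a_0=1,a_1,a_2,\dots$ by $\sum_{n\ge0}a_nz^n=\bigl(\sum_{n\ge0}w_nz^n\bigr)^{-1}$. Then \[ \sum_{L}w_L\,\mathbf r_L=\Bigl(\sum_{n\ge0}a_n\mathbf h_n\Bigr)^{-1}, \] where the sum is over all compositions $L$ (including the empty one, with $\mathbf r_\emptyset=1$) and $w_L=w_{L_1}\cdots w_{L_k}$ for $L=(L_1,\dots,L_k)$.
   Context: $F$ is a field of characteristic $0$. In $F\langle\langle X_1,X_2,\dots\rangle\rangle$ (noncommuting variables), $\mathbf h_n=\sum_{i_1\le\cdots\le i_n}X_{i_1}\cdots X_{i_n}$ ($\mathbf h_0=1$). For a composition $L=(L_1,\dots,L_k)$ of $n$, $\mathbf r_L=\sum X_{i_1}\cdots X_{i_n}$ over $(i_1,\dots,i_n)$ with $i_1\le\cdots\le i_{L_1}>i_{L_1+1}\le\cdots\le i_{L_1+L_2}>\cdots>i_{L_1+\cdots+L_{k-1}+1}\le\cdots\le i_n$. *)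

theory Defs
  imports "HOL-Computational_Algebra.Formal_Power_Series"
begin

text \<open>Noncommutative formal power series over F in variables X_1, X_2, ...
  A word X_{i_1} ... X_{i_n} is represented by the list [i_1, ..., i_n] of naturals
  (the index set is an order-isomorphic copy of the positive integers); a series
  is its coefficient function on words.\<close>

type_synonym 'a ncseries = "nat list \<Rightarrow> 'a"

definition nc_one :: "'a::zero_neq_one ncseries" where
  "nc_one u = (if u = [] then 1 else 0)"

definition nc_mult :: "'a::comm_semiring_1 ncseries \<Rightarrow> 'a ncseries \<Rightarrow> 'a ncseries" where
  "nc_mult f g u = (\<Sum>k\<le>length u. f (take k u) * g (drop k u))"

definition h_series :: "nat \<Rightarrow> 'a::zero_neq_one ncseries" where
  "h_series n u = (if length u = n \<and> sorted u then 1 else 0)"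

definition compositions :: "nat \<Rightarrow> nat list set" where
  "compositions n = {L. (\<forall>x\<in>set L. 0 < x) \<and> sum_list L = n}"

definition comp_breaks :: "nat list \<Rightarrow> nat set" where
  "comp_breaks L = {sum_list (take m L) | m. 0 < m \<and> m < length L}"

text \<open>r_L: sum of the words i_1..i_n, weakly increasing inside blocks and strictly
  decreasing across block boundaries (0-indexed positions j, j+1).\<close>
definition r_series :: "nat list \<Rightarrow> 'a::zero_neq_one ncseries" where
  "r_series L u = (if length u = sum_list L \<and>
      (\<forall>j. Suc j < length u \<longrightarrow>
         (if Suc j \<in> comp_breaks L then u ! j > u ! Suc j else u ! j \<le> u ! Suc j))
    then 1 else 0)"

definition w_comp :: "(nat \<Rightarrow> 'a::comm_monoid_mult) \<Rightarrow> nat list \<Rightarrow> 'a" where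
  "w_comp w L = prod_list (map w L)"

text \<open>\<Sum>_L w_L r_L (only compositions of length u contribute to the coefficient of u).\<close>
definition sum_wr :: "(nat \<Rightarrow> 'a::comm_semiring_1) \<Rightarrow> 'a ncseries" where
  "sum_wr w u = (\<Sum>L\<in>compositions (length u). w_comp w L * r_series L u)"

definition a_coeff :: "(nat \<Rightarrow> 'a::field) \<Rightarrow> nat \<Rightarrow> 'a" where
  "a_coeff w n = fps_nth (inverse (Abs_fps (\<lambda>k. if k = 0 then 1 else w k))) n"

text \<open>\<Sum>_n a_n h_n (only n = length u contributes to the coefficient of u).\<close>
definition sum_ah :: "(nat \<Rightarrow> 'a::field) \<Rightarrow> 'a ncseries" where
  "sum_ah w u = a_coeff w (length u) * h_series (length u) u"

end

theory Submission imports Defs begin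

definition rcond :: "nat list \<Rightarrow> nat list \<Rightarrow> bool" where
  "rcond L u \<longleftrightarrow> length u = sum_list L \<and>
     (\<forall>j. Suc j < length u \<longrightarrow> (Suc j \<in> comp_breaks L \<longleftrightarrow> u ! j > u ! Suc j))"

lemma r_series_rcond: "r_series L u = (if rcond L u then 1 else 0)"
  unfolding r_series_def rcond_def
  by (intro if_cong refl) (auto simp: not_less split: if_splits)

lemma breaks_cons: "comp_breaks (x#L) = (if L = [] then {} else insert x ((+) x ` comp_breaks L))"
proof (cases "L = []")
  case True then show ?thesis by (auto simp: comp_breaks_def)
next
  case False
  have "comp_breaks (x#L) = insert x ((+) x ` comp_breaks L)"
  proof (intro equalityI subsetI)
    fix y assume "y \<in> comp_breaks (x#L)"
    then obtain m where m: "0<m" "m < Suc (length L)" "y = sum_list (take m (x#L))"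
      unfolding comp_breaks_def by auto
    show "y \<in> insert x ((+) x ` comp_breaks L)"
    proof (cases m)
      case 0 then show ?thesis using m by simp
    next
      case (Suc k)
      show ?thesis
      proof (cases k)
        case 0 then show ?thesis using m Suc by simp
      next
        case (Suc k') then show ?thesis using m \<open>m = Suc k\<close> unfolding comp_breaks_def
          by (intro insertI2 imageI) (auto intro!: exI[of _ k])
      qed
    qed
  next
    fix y assume "y \<in> insert x ((+) x ` comp_breaks L)"
    then show "y \<in> comp_breaks (x#L)"
    proof
      assume "y = x" then show ?thesis using False unfolding comp_breaks_def
        by (auto intro!: exI[of _ 1])
    next
      assume "y \<in> (+) x ` comp_breaks L"
      then obtain m where "0<m" "m < length L" "y = x + sum_list (take m L)"
        unfolding comp_breaks_def by auto
      then show ?thesis unfolding comp_breaks_def by (auto intro!: exI[of _ "Suc m"])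
    qed
  qed
  then show ?thesis using False by simp
qed

lemma breaks_le: "y \<in> comp_breaks L \<Longrightarrow> y \<le> (sum_list L :: nat)"
  unfolding comp_breaks_def
  by (auto, metis append_take_drop_id sum_list_append le_add1)

lemma breaks_snoc: "comp_breaks (L@[x]) = (if L = [] then {} else insert (sum_list L) (comp_breaks L))"
proof (cases "L = []")
  case True then show ?thesis by (auto simp: comp_breaks_def)
next
  case False
  have "comp_breaks (L@[x]) = insert (sum_list L) (comp_breaks L)"
  proof (intro equalityI subsetI)
    fix y assume "y \<in> comp_breaks (L@[x])"
    then obtain m where m: "0<m" "m < Suc (length L)" "y = sum_list (take m (L@[x]))"
      unfolding comp_breaks_def by auto
    show "y \<in> insert (sum_list L) (comp_breaks L)"
    proof (cases "m = length L")
      case True then show ?thesis using m by simp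
    next
      case False then show ?thesis using m unfolding comp_breaks_def by auto
    qed
  next
    fix y assume "y \<in> insert (sum_list L) (comp_breaks L)"
    then show "y \<in> comp_breaks (L@[x])"
    proof
      assume "y = sum_list L" then show ?thesis using False unfolding comp_breaks_def
        by (auto intro!: exI[of _ "length L"])
    next
      assume "y \<in> comp_breaks L"
      then obtain m where "0<m" "m < length L" "y = sum_list (take m L)"
        unfolding comp_breaks_def by auto
      then show ?thesis unfolding comp_breaks_def by (auto intro!: exI[of _ m])
    qed
  qed
  then show ?thesis using False by simp
qed

lemma all_split_cons:
  assumes "0 < (x::nat)" "x \<le> n"
  shows "(\<forall>j. Suc j < n \<longrightarrow> P j) \<longleftrightarrow>
    (\<forall>j. Suc j < x \<longrightarrow> P j) \<and> (x < n \<longrightarrow> P (x - 1)) \<and> (\<forall>j. Suc j < n - x \<longrightarrow> P (x + j))"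
proof (intro iffI allI impI)
  assume A: "\<forall>j. Suc j < n \<longrightarrow> P j"
  show "(\<forall>j. Suc j < x \<longrightarrow> P j) \<and> (x < n \<longrightarrow> P (x - 1)) \<and> (\<forall>j. Suc j < n - x \<longrightarrow> P (x + j))"
    using A assms by (auto dest: spec[of _ "x - 1"])
next
  fix j assume H0: "(\<forall>j. Suc j < x \<longrightarrow> P j) \<and> (x < n \<longrightarrow> P (x - 1)) \<and> (\<forall>j. Suc j < n - x \<longrightarrow> P (x + j))"
    and j: "Suc j < n"
  note H = conjunct1[OF H0] conjunct1[OF conjunct2[OF H0]] conjunct2[OF conjunct2[OF H0]]
  consider "Suc j < x" | "Suc j = x" | "Suc j > x" by linarith
  then show "P j"
  proof cases
    case 1 then show ?thesis using H j by auto
  next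
    case 2 then show ?thesis using H j by auto
  next
    case 3
    have "Suc (j - x) < n - x" using 3 j by auto
    then have "P (x + (j - x))" using H(3) by blast
    then show ?thesis using 3 by simp
  qed
qed

lemma sorted_take_iff: "sorted (take x u) \<longleftrightarrow> (\<forall>j. Suc j < x \<longrightarrow> Suc j < length u \<longrightarrow> u!j \<le> u!Suc j)"
  by (auto simp: sorted_iff_nth_Suc)

lemma sorted_drop_iff: "sorted (drop x u) \<longleftrightarrow> (\<forall>j. Suc j < length u - x \<longrightarrow> u!(x+j) \<le> u!Suc (x+j))"
  by (auto simp: sorted_iff_nth_Suc)

lemma rcond_cons:
  assumes "0 < x"
  shows "rcond (x#L) u \<longleftrightarrow> length u = x + sum_list L \<and> sorted (take x u) \<and>
     (x < length u \<longrightarrow> u!(x-1) > u!x) \<and> rcond L (drop x u)"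
proof (cases "length u = x + sum_list L")
  case False then show ?thesis unfolding rcond_def by auto
next
  case len: True
  show ?thesis
  proof (cases "L = []")
    case True
    then show ?thesis using len unfolding rcond_def breaks_cons
      by (auto simp: sorted_iff_nth_Suc not_less)
  next
    case False
    let ?B = "insert x ((+) x ` comp_breaks L)"
    have "rcond (x#L) u \<longleftrightarrow> (\<forall>j. Suc j < length u \<longrightarrow> (Suc j \<in> ?B \<longleftrightarrow> u ! j > u ! Suc j))"
      using len False unfolding rcond_def breaks_cons by simp
    also have "\<dots> \<longleftrightarrow> (\<forall>j. Suc j < x \<longrightarrow> (Suc j \<in> ?B \<longleftrightarrow> u ! j > u ! Suc j)) \<and>
       (x < length u \<longrightarrow> (Suc (x-1) \<in> ?B \<longleftrightarrow> u ! (x-1) > u ! Suc (x-1))) \<and>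
       (\<forall>j. Suc j < length u - x \<longrightarrow> (Suc (x+j) \<in> ?B \<longleftrightarrow> u ! (x+j) > u ! Suc (x+j)))"
      by (rule all_split_cons) (use assms len in auto)
    also have "\<dots> \<longleftrightarrow> sorted (take x u) \<and> (x < length u \<longrightarrow> u!(x-1) > u!x) \<and> rcond L (drop x u)"
    proof -
      have 1: "(\<forall>j. Suc j < x \<longrightarrow> (Suc j \<in> ?B \<longleftrightarrow> u ! j > u ! Suc j)) \<longleftrightarrow> sorted (take x u)"
        unfolding sorted_take_iff using len by (auto simp: not_less)
      have 2: "(x < length u \<longrightarrow> (Suc (x-1) \<in> ?B \<longleftrightarrow> u ! (x-1) > u ! Suc (x-1))) \<longleftrightarrow>
          (x < length u \<longrightarrow> u!(x-1) > u!x)" using assms by simp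
      have 3: "(\<forall>j. Suc j < length u - x \<longrightarrow> (Suc (x+j) \<in> ?B \<longleftrightarrow> u ! (x+j) > u ! Suc (x+j)))
          \<longleftrightarrow> rcond L (drop x u)"
        unfolding rcond_def using len by auto
      show ?thesis using 1 2 3 by blast
    qed
    finally show ?thesis using len by simp
  qed
qed

lemma all_split_snoc:
  assumes "(s::nat) \<le> n"
  shows "(\<forall>j. Suc j < n \<longrightarrow> P j) \<longleftrightarrow>
    (\<forall>j. Suc j < s \<longrightarrow> P j) \<and> (0 < s \<and> s < n \<longrightarrow> P (s - 1)) \<and> (\<forall>j. Suc j < n - s \<longrightarrow> P (s + j))"
proof (intro iffI allI impI)
  assume A: "\<forall>j. Suc j < n \<longrightarrow> P j"
  show "(\<forall>j. Suc j < s \<longrightarrow> P j) \<and> (0 < s \<and> s < n \<longrightarrow> P (s - 1)) \<and> (\<forall>j. Suc j < n - s \<longrightarrow> P (s + j))"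
    using A assms by (auto dest: spec[of _ "s - 1"])
next
  fix j assume H0: "(\<forall>j. Suc j < s \<longrightarrow> P j) \<and> (0 < s \<and> s < n \<longrightarrow> P (s - 1)) \<and> (\<forall>j. Suc j < n - s \<longrightarrow> P (s + j))"
    and j: "Suc j < n"
  note H = conjunct1[OF H0] conjunct1[OF conjunct2[OF H0]] conjunct2[OF conjunct2[OF H0]]
  consider "Suc j < s" | "Suc j = s" | "Suc j > s" by linarith
  then show "P j"
  proof cases
    case 1 then show ?thesis using H j by auto
  next
    case 2 then show ?thesis using H j by auto
  next
    case 3
    have "Suc (j - s) < n - s" using 3 j by auto
    then have "P (s + (j - s))" using H(3) by blast
    then show ?thesis using 3 by simp
  qed
qed

lemma rcond_snoc:
  assumes "0 < x"
  shows "rcond (L@[x]) u \<longleftrightarrow> length u = sum_list L + x \<and> sorted (drop (sum_list L) u) \<and>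
     (0 < sum_list L \<longrightarrow> u!(sum_list L - 1) > u!(sum_list L)) \<and> rcond L (take (sum_list L) u)"
proof (cases "length u = sum_list L + x")
  case False then show ?thesis unfolding rcond_def by auto
next
  case len: True
  define s where "s = sum_list L"
  show ?thesis
  proof (cases "L = []")
    case True
    then show ?thesis using len unfolding rcond_def breaks_snoc
      by (auto simp: sorted_iff_nth_Suc not_less)
  next
    case False
    let ?B = "insert s (comp_breaks L)"
    have Ble: "\<And>y. y \<in> comp_breaks L \<Longrightarrow> y \<le> s" unfolding s_def by (rule breaks_le)
    have "rcond (L@[x]) u \<longleftrightarrow> (\<forall>j. Suc j < length u \<longrightarrow> (Suc j \<in> ?B \<longleftrightarrow> u ! j > u ! Suc j))"
      using len False unfolding rcond_def breaks_snoc s_def by simp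
    also have "\<dots> \<longleftrightarrow> (\<forall>j. Suc j < s \<longrightarrow> (Suc j \<in> ?B \<longleftrightarrow> u ! j > u ! Suc j)) \<and>
       (0 < s \<and> s < length u \<longrightarrow> (Suc (s-1) \<in> ?B \<longleftrightarrow> u ! (s-1) > u ! Suc (s-1))) \<and>
       (\<forall>j. Suc j < length u - s \<longrightarrow> (Suc (s+j) \<in> ?B \<longleftrightarrow> u ! (s+j) > u ! Suc (s+j)))"
      by (rule all_split_snoc) (use assms len s_def in auto)
    also have "\<dots> \<longleftrightarrow> sorted (drop s u) \<and> (0 < s \<longrightarrow> u!(s-1) > u!s) \<and> rcond L (take s u)"
    proof -
      have 1: "(\<forall>j. Suc j < s \<longrightarrow> (Suc j \<in> ?B \<longleftrightarrow> u ! j > u ! Suc j)) \<longleftrightarrow> rcond L (take s u)"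
        unfolding rcond_def using len s_def by auto
      have 2: "(0 < s \<and> s < length u \<longrightarrow> (Suc (s-1) \<in> ?B \<longleftrightarrow> u ! (s-1) > u ! Suc (s-1))) \<longleftrightarrow>
          (0 < s \<longrightarrow> u!(s-1) > u!s)" using assms len s_def by auto
      have 3: "(\<forall>j. Suc j < length u - s \<longrightarrow> (Suc (s+j) \<in> ?B \<longleftrightarrow> u ! (s+j) > u ! Suc (s+j)))
          \<longleftrightarrow> sorted (drop s u)"
      proof -
        have "\<And>j. Suc (s+j) \<notin> ?B" using Ble by fastforce
        then show ?thesis unfolding sorted_drop_iff by (auto simp: not_less)
      qed
      show ?thesis using 1 2 3 by blast
    qed
    finally show ?thesis using len s_def by simp
  qed
qed

lemma length_le_sum_list: "\<forall>x\<in>set L. 0 < x \<Longrightarrow> length L \<le> sum_list (L::nat list)"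
  by (induction L) auto

lemma finite_compositions: "finite (compositions n)"
proof (rule finite_subset)
  show "compositions n \<subseteq> {xs. set xs \<subseteq> {0..n} \<and> length xs \<le> n}"
    unfolding compositions_def using length_le_sum_list member_le_sum_list by fastforce
  show "finite {xs. set xs \<subseteq> {0..n} \<and> length xs \<le> n}"
    by (rule finite_lists_length_le) simp
qed

lemma comp_cons: "0 < n \<Longrightarrow> compositions n = (\<Union>x\<in>{1..n}. Cons x ` compositions (n-x))"
  unfolding compositions_def
proof (intro equalityI subsetI)
  fix L assume "0<n" "L \<in> {L. (\<forall>x\<in>set L. 0 < x) \<and> sum_list L = n}"
  then show "L \<in> (\<Union>x\<in>{1..n}. Cons x ` {L. (\<forall>x\<in>set L. 0 < x) \<and> sum_list L = n - x})"
    by (cases L) (auto intro!: bexI)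
qed auto

lemma comp_snoc: "0 < n \<Longrightarrow> compositions n = (\<Union>x\<in>{1..n}. (\<lambda>L. L@[x]) ` compositions (n-x))"
  unfolding compositions_def
proof (intro equalityI subsetI)
  fix L assume "0<n" "L \<in> {L. (\<forall>x\<in>set L. 0 < x) \<and> sum_list L = n}"
  then show "L \<in> (\<Union>x\<in>{1..n}. (\<lambda>L. L@[x]) ` {L. (\<forall>x\<in>set L. 0 < x) \<and> sum_list L = n - x})"
    by (cases L rule: rev_cases) (auto intro!: bexI)
qed auto

lemma sum_comp_cons:
  "0 < n \<Longrightarrow> (\<Sum>L\<in>compositions n. f L) = (\<Sum>x=1..n. \<Sum>L\<in>compositions (n-x). f (x#L))"
  apply (subst comp_cons, assumption)
  apply (subst sum.UNION_disjoint)
     apply (auto simp: finite_compositions sum.reindex)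
  done

lemma sum_comp_snoc:
  "0 < n \<Longrightarrow> (\<Sum>L\<in>compositions n. f L) = (\<Sum>x=1..n. \<Sum>L\<in>compositions (n-x). f (L@[x]))"
  apply (subst comp_snoc, assumption)
  apply (subst sum.UNION_disjoint)
     apply (auto simp: finite_compositions)
  apply (rule sum.cong[OF refl])
  apply (subst sum.reindex)
   apply (auto simp: inj_on_def)
  done

lemma sum_wr_Nil: "sum_wr w [] = 1"
proof -
  have "compositions 0 = {[]}" unfolding compositions_def
    by (auto, case_tac x, auto)
  then show ?thesis unfolding sum_wr_def by (simp add: w_comp_def r_series_rcond rcond_def)
qed

lemma sum_if_const: "(\<Sum>x\<in>A. if C then f x else 0) = (if C then sum f A else 0)"
  by simp

lemma sum_wr_front:
  assumes "length u = n" "0 < n"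
  shows "sum_wr w u = (\<Sum>x=1..n. if sorted (take x u) \<and> (x < n \<longrightarrow> u!(x-1) > u!x)
            then w x * sum_wr w (drop x u) else 0)"
proof -
  have "sum_wr w u = (\<Sum>x=1..n. \<Sum>L\<in>compositions (n-x). w_comp w (x#L) * r_series (x#L) u)"
    unfolding sum_wr_def assms(1) by (rule sum_comp_cons[OF assms(2)])
  also have "\<dots> = (\<Sum>x=1..n. if sorted (take x u) \<and> (x < n \<longrightarrow> u!(x-1) > u!x)
            then w x * sum_wr w (drop x u) else 0)"
  proof (rule sum.cong[OF refl])
    fix x assume x: "x \<in> {1..n}"
    have "w_comp w (x#L) * r_series (x#L) u =
       (if sorted (take x u) \<and> (x < n \<longrightarrow> u!(x-1) > u!x) then w x * (w_comp w L * r_series L (drop x u)) else 0)"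
      if "L \<in> compositions (n-x)" for L
      using that x assms rcond_cons[of x L u]
      by (auto simp: r_series_rcond w_comp_def compositions_def)
    then have "(\<Sum>L\<in>compositions (n-x). w_comp w (x#L) * r_series (x#L) u) =
       (\<Sum>L\<in>compositions (n-x). if sorted (take x u) \<and> (x < n \<longrightarrow> u!(x-1) > u!x) then w x * (w_comp w L * r_series L (drop x u)) else 0)"
      by (rule sum.cong[OF refl])
    also have "\<dots> = (if sorted (take x u) \<and> (x < n \<longrightarrow> u!(x-1) > u!x) then w x * sum_wr w (drop x u) else 0)"
    proof -
      have eq: "sum_wr w (drop x u) = (\<Sum>L\<in>compositions (n-x). w_comp w L * r_series L (drop x u))"
        using assms by (simp add: sum_wr_def)
      show ?thesis by (simp only: sum_if_const eq sum_distrib_left)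
    qed
    finally show "(\<Sum>L\<in>compositions (n-x). w_comp w (x#L) * r_series (x#L) u) =
       (if sorted (take x u) \<and> (x < n \<longrightarrow> u!(x-1) > u!x) then w x * sum_wr w (drop x u) else 0)" .
  qed
  finally show ?thesis .
qed

lemma sum_wr_back:
  assumes "length u = n" "0 < n"
  shows "sum_wr w u = (\<Sum>x=1..n. if sorted (drop (n-x) u) \<and> (0 < n-x \<longrightarrow> u!(n-x-1) > u!(n-x))
            then sum_wr w (take (n-x) u) * w x else 0)"
proof -
  have "sum_wr w u = (\<Sum>x=1..n. \<Sum>L\<in>compositions (n-x). w_comp w (L@[x]) * r_series (L@[x]) u)"
    unfolding sum_wr_def assms(1) by (rule sum_comp_snoc[OF assms(2)])
  also have "\<dots> = (\<Sum>x=1..n. if sorted (drop (n-x) u) \<and> (0 < n-x \<longrightarrow> u!(n-x-1) > u!(n-x))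
            then sum_wr w (take (n-x) u) * w x else 0)"
  proof (rule sum.cong[OF refl])
    fix x assume x: "x \<in> {1..n}"
    have "w_comp w (L@[x]) * r_series (L@[x]) u =
       (if sorted (drop (n-x) u) \<and> (0 < n-x \<longrightarrow> u!(n-x-1) > u!(n-x)) then (w_comp w L * r_series L (take (n-x) u)) * w x else 0)"
      if "L \<in> compositions (n-x)" for L
      using that x assms rcond_snoc[of x L u]
      by (auto simp: r_series_rcond w_comp_def compositions_def)
    then have "(\<Sum>L\<in>compositions (n-x). w_comp w (L@[x]) * r_series (L@[x]) u) =
       (\<Sum>L\<in>compositions (n-x). if sorted (drop (n-x) u) \<and> (0 < n-x \<longrightarrow> u!(n-x-1) > u!(n-x)) then (w_comp w L * r_series L (take (n-x) u)) * w x else 0)"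
      by (rule sum.cong[OF refl])
    also have "\<dots> = (if sorted (drop (n-x) u) \<and> (0 < n-x \<longrightarrow> u!(n-x-1) > u!(n-x)) then sum_wr w (take (n-x) u) * w x else 0)"
    proof -
      have eq: "sum_wr w (take (n-x) u) = (\<Sum>L\<in>compositions (n-x). w_comp w L * r_series L (take (n-x) u))"
        using assms by (simp add: sum_wr_def)
      show ?thesis by (simp only: sum_if_const eq sum_distrib_right)
    qed
    finally show "(\<Sum>L\<in>compositions (n-x). w_comp w (L@[x]) * r_series (L@[x]) u) =
       (if sorted (drop (n-x) u) \<and> (0 < n-x \<longrightarrow> u!(n-x-1) > u!(n-x)) then sum_wr w (take (n-x) u) * w x else 0)" .
  qed
  finally show ?thesis .
qed

definition wz :: "(nat \<Rightarrow> 'a::field) \<Rightarrow> nat \<Rightarrow> 'a" where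
  "wz w k = (if k = 0 then 1 else w k)"

lemma conv1:
  fixes w :: "nat \<Rightarrow> 'a::field"
  assumes "0 < p"
  shows "(\<Sum>k\<le>p. a_coeff w k * wz w (p-k)) = 0"
proof -
  define F :: "'a fps" where "F = Abs_fps (\<lambda>k. if k = 0 then 1 else w k)"
  have "inverse F * F = 1" by (rule inverse_mult_eq_1) (simp add: F_def)
  then have "fps_nth (inverse F * F) p = 0" using assms by simp
  then show ?thesis unfolding fps_mult_nth
    by (simp add: a_coeff_def wz_def F_def atLeast0AtMost)
qed

lemma conv2:
  fixes w :: "nat \<Rightarrow> 'a::field"
  assumes "0 < p"
  shows "(\<Sum>k\<le>p. wz w k * a_coeff w (p-k)) = 0"
proof -
  define F :: "'a fps" where "F = Abs_fps (\<lambda>k. if k = 0 then 1 else w k)"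
  have "F * inverse F = 1" by (rule inverse_mult_eq_1') (simp add: F_def)
  then have "fps_nth (F * inverse F) p = 0" using assms by simp
  then show ?thesis unfolding fps_mult_nth
    by (simp add: a_coeff_def wz_def F_def atLeast0AtMost)
qed

lemma sum_single:
  assumes "finite A" "a \<in> A" "\<And>x. x \<in> A \<Longrightarrow> x \<noteq> a \<Longrightarrow> f x = 0"
  shows "sum f A = f a"
  using sum.remove[OF assms(1,2), of f] assms(3) by simp

lemma W_drop_front:
  assumes n: "length u = n" and p: "0 < p" "p \<le> n" and st: "sorted (take p u)"
    and d: "p < n \<longrightarrow> u!(p-1) > u!p" and k: "k \<le> p"
  shows "sum_wr w (drop k u) = wz w (p-k) * sum_wr w (drop p u)"
proof (cases "k = p")
  case True then show ?thesis by (simp add: wz_def)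
next
  case False
  then have kp: "k < p" using k by simp
  let ?v = "drop k u"
  have lv: "length ?v = n - k" using n by simp
  let ?C = "\<lambda>x. sorted (take x ?v) \<and> (x < n-k \<longrightarrow> ?v!(x-1) > ?v!x)"
  have "sum_wr w ?v = (\<Sum>x=1..n-k. if ?C x then w x * sum_wr w (drop x ?v) else 0)"
    by (rule sum_wr_front[OF lv]) (use kp p in simp)
  also have "\<dots> = (if ?C (p-k) then w (p-k) * sum_wr w (drop (p-k) ?v) else 0)"
  proof (rule sum_single)
    show "p - k \<in> {1..n-k}" using kp p by auto
    fix x assume x: "x \<in> {1..n-k}" "x \<noteq> p - k"
    show "(if ?C x then w x * sum_wr w (drop x ?v) else 0) = 0"
    proof (cases "x < p - k")
      case True
      have e: "Suc (k+x-1) = k+x" using x by simp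
      have "Suc (k+x-1) < p" "Suc (k+x-1) < length u" using True x kp p n by auto
      then have "u!(k+x-1) \<le> u!Suc (k+x-1)"
        using st unfolding sorted_take_iff by blast
      then have "u!(k+x-1) \<le> u!(k+x)" by (simp only: e)
      moreover have "?v!(x-1) = u!(k+x-1)" "?v!x = u!(k+x)" using x True kp p n by auto
      moreover have "x < n - k" using True p by simp
      ultimately show ?thesis by auto
    next
      case False
      then have xg: "x > p - k" using x by simp
      have "p < n" using xg x kp by auto
      then have "u!(p-1) > u!p" using d by simp
      moreover have "\<not> sorted (take x ?v)"
      proof
        assume "sorted (take x ?v)"
        then have "\<forall>j. Suc j < x \<longrightarrow> Suc j < length ?v \<longrightarrow> ?v!j \<le> ?v!Suc j"
          unfolding sorted_take_iff .
        moreover have "Suc (p-k-1) < x" "Suc (p-k-1) < length ?v" using xg x kp n by auto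
        ultimately have "?v!(p-k-1) \<le> ?v!(Suc (p-k-1))" by blast
        moreover have "?v!(p-k-1) = u!(p-1)" "?v!(Suc (p-k-1)) = u!p" using kp n \<open>p<n\<close> by auto
        ultimately have "u!(p-1) \<le> u!p" by simp
        then show False using \<open>u!(p-1) > u!p\<close> by simp
      qed
      then show ?thesis by simp
    qed
  qed simp
  also have "?C (p-k)"
  proof
    show "sorted (take (p-k) ?v)" using st
      by (metis drop_take sorted_wrt_drop)
    show "p - k < n - k \<longrightarrow> ?v!(p-k-1) > ?v!(p-k)"
      using d kp n by (auto simp: Suc_diff_Suc)
  qed
  then have "(if ?C (p-k) then w (p-k) * sum_wr w (drop (p-k) ?v) else 0) = wz w (p-k) * sum_wr w (drop p u)"
    using kp by (simp add: wz_def)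
  finally show ?thesis .
qed

lemma W_take_back:
  assumes n: "length u = n" and q: "q \<le> n" "q < n" and st: "sorted (drop q u)"
    and d: "0 < q \<longrightarrow> u!(q-1) > u!q" and k: "q \<le> k" "k \<le> n"
  shows "sum_wr w (take k u) = sum_wr w (take q u) * wz w (k-q)"
proof (cases "k = q")
  case True then show ?thesis by (simp add: wz_def)
next
  case False
  then have kq: "q < k" using k by simp
  let ?v = "take k u"
  have lv: "length ?v = k" using n k by simp
  let ?C = "\<lambda>x. sorted (drop (k-x) ?v) \<and> (0 < k-x \<longrightarrow> ?v!(k-x-1) > ?v!(k-x))"
  have "sum_wr w ?v = (\<Sum>x=1..k. if ?C x then sum_wr w (take (k-x) ?v) * w x else 0)"
    by (rule sum_wr_back[OF lv]) (use kq in simp)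
  also have "\<dots> = (if ?C (k-q) then sum_wr w (take (k-(k-q)) ?v) * w (k-q) else 0)"
  proof (rule sum_single)
    show "k - q \<in> {1..k}" using kq by auto
    fix x assume x: "x \<in> {1..k}" "x \<noteq> k - q"
    show "(if ?C x then sum_wr w (take (k-x) ?v) * w x else 0) = 0"
    proof (cases "x < k - q")
      case True
      define j where "j = k - x - 1 - q"
      have e: "q + j = k - x - 1" "Suc (q + j) = k - x" using True x unfolding j_def by auto
      have "Suc j < length u - q" using True x k n unfolding j_def by auto
      then have "u!(q+j) \<le> u!Suc (q+j)" using st unfolding sorted_drop_iff by blast
      then have "u!(k-x-1) \<le> u!(k-x)" by (metis e(1) e(2))
      moreover have "?v!(k-x-1) = u!(k-x-1)" "?v!(k-x) = u!(k-x)" using x True by auto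
      moreover have "0 < k - x" using True by simp
      ultimately show ?thesis by auto
    next
      case False
      then have xg: "x > k - q" using x by simp
      then have "0 < q" using x by auto
      then have "u!(q-1) > u!q" using d by simp
      moreover have "\<not> sorted (drop (k-x) ?v)"
      proof
        assume "sorted (drop (k-x) ?v)"
        then have "\<forall>j. Suc j < length ?v - (k-x) \<longrightarrow> ?v!((k-x)+j) \<le> ?v!Suc ((k-x)+j)"
          unfolding sorted_drop_iff .
        moreover have "Suc (q-1-(k-x)) < length ?v - (k-x)" using xg x kq lv by auto
        ultimately have "?v!((k-x)+(q-1-(k-x))) \<le> ?v!Suc ((k-x)+(q-1-(k-x)))" by blast
        moreover have "(k-x)+(q-1-(k-x)) = q - 1" "Suc ((k-x)+(q-1-(k-x))) = q"
          using xg x \<open>0<q\<close> by auto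
        ultimately have "?v!(q-1) \<le> ?v!q" by simp
        moreover have "?v!(q-1) = u!(q-1)" "?v!q = u!q" using kq by auto
        ultimately have "u!(q-1) \<le> u!q" by simp
        then show False using \<open>u!(q-1) > u!q\<close> by simp
      qed
      then show ?thesis by simp
    qed
  qed simp
  also have "?C (k-q)"
  proof
    show "sorted (drop (k-(k-q)) ?v)" using st kq
      by (simp add: drop_take)
    show "0 < k-(k-q) \<longrightarrow> ?v!(k-(k-q)-1) > ?v!(k-(k-q))"
      using d kq by auto
  qed
  then have "(if ?C (k-q) then sum_wr w (take (k-(k-q)) ?v) * w (k-q) else 0) = sum_wr w (take q u) * wz w (k-q)"
    using kq by (simp add: wz_def min_def)
  finally show ?thesis .
qed

lemma a_coeff_0: "a_coeff w 0 = 1"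
  by (simp add: a_coeff_def)

lemma sum_ah_take: "k \<le> length u \<Longrightarrow> sum_ah w (take k u) = a_coeff w k * (if sorted (take k u) then 1 else 0)"
  by (simp add: sum_ah_def h_series_def min_def)

lemma sum_ah_drop: "k \<le> length u \<Longrightarrow> sum_ah w (drop k u) = a_coeff w (length u - k) * (if sorted (drop k u) then 1 else 0)"
  by (simp add: sum_ah_def h_series_def)

lemma AW: "nc_mult (sum_ah w) (sum_wr w) u = nc_one u"
proof (cases "u = []")
  case True
  then show ?thesis by (simp add: nc_mult_def nc_one_def sum_wr_Nil sum_ah_def h_series_def a_coeff_0)
next
  case False
  define n where "n = length u"
  have n0: "0 < n" using False n_def by simp
  define Q where "Q = (\<lambda>p. 0 < p \<and> (p = n \<or> (p < n \<and> u!(p-1) > u!p)))"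
  define p where "p = (LEAST p. Q p)"
  have Qn: "Q n" using n0 by (simp add: Q_def)
  have P: "Q p" unfolding p_def by (rule LeastI[of Q, OF Qn])
  have pn: "p \<le> n" unfolding p_def by (rule Least_le[of Q, OF Qn])
  have p0: "0 < p" and d: "p < n \<longrightarrow> u!(p-1) > u!p" using P by (auto simp: Q_def)
  have st: "sorted (take p u)" unfolding sorted_take_iff
  proof (intro allI impI)
    fix j assume j: "Suc j < p" "Suc j < length u"
    show "u!j \<le> u!Suc j"
    proof (rule ccontr)
      assume "\<not> u!j \<le> u!Suc j"
      then have "Q (Suc j)" using j n_def by (auto simp: Q_def)
      then have "p \<le> Suc j" unfolding p_def by (rule Least_le)
      then show False using j by simp
    qed
  qed
  let ?f = "\<lambda>k. sum_ah w (take k u) * sum_wr w (drop k u)"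
  have "nc_mult (sum_ah w) (sum_wr w) u = (\<Sum>k\<le>n. ?f k)" by (simp add: nc_mult_def n_def)
  also have "\<dots> = (\<Sum>k\<le>p. ?f k)"
  proof (rule sum.mono_neutral_right)
    show "\<forall>k\<in>{..n} - {..p}. ?f k = 0"
    proof
      fix k assume k: "k \<in> {..n} - {..p}"
      then have "p < n" by auto
      then have "u!(p-1) > u!p" using d by simp
      have "\<not> sorted (take k u)"
      proof
        assume "sorted (take k u)"
        moreover have "Suc (p-1) < k" "Suc (p-1) < length u" using k p0 n_def by auto
        ultimately have "u!(p-1) \<le> u!Suc (p-1)" unfolding sorted_take_iff by blast
        then show False using \<open>u!(p-1) > u!p\<close> p0 by simp
      qed
      then show "?f k = 0" using k n_def by (simp add: sum_ah_take)
    qed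
  qed (use pn in auto)
  also have "\<dots> = (\<Sum>k\<le>p. a_coeff w k * wz w (p-k) * sum_wr w (drop p u))"
  proof (rule sum.cong[OF refl])
    fix k assume k: "k \<in> {..p}"
    have "sorted (take k u)" using st k by (metis atMost_iff min_absorb1 sorted_wrt_take take_take)
    then show "?f k = a_coeff w k * wz w (p-k) * sum_wr w (drop p u)"
      using k pn n_def W_drop_front[OF n_def[symmetric] p0 pn st d, of k w]
      by (simp add: sum_ah_take)
  qed
  also have "\<dots> = (\<Sum>k\<le>p. a_coeff w k * wz w (p-k)) * sum_wr w (drop p u)"
    by (simp add: sum_distrib_right)
  also have "\<dots> = 0" by (simp add: conv1[OF p0])
  finally show ?thesis using False by (simp add: nc_one_def)
qed

lemma WA: "nc_mult (sum_wr w) (sum_ah w) u = nc_one u"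
proof (cases "u = []")
  case True
  then show ?thesis by (simp add: nc_mult_def nc_one_def sum_wr_Nil sum_ah_def h_series_def a_coeff_0)
next
  case False
  define n where "n = length u"
  have n0: "0 < n" using False n_def by simp
  define Q where "Q = (\<lambda>s. 0 < s \<and> (s = n \<or> (s < n \<and> u!(n-s-1) > u!(n-s))))"
  define s where "s = (LEAST s. Q s)"
  have Qn: "Q n" using n0 by (simp add: Q_def)
  have P: "Q s" unfolding s_def by (rule LeastI[of Q, OF Qn])
  have sn: "s \<le> n" unfolding s_def by (rule Least_le[of Q, OF Qn])
  define q where "q = n - s"
  have s0: "0 < s" using P by (auto simp: Q_def)
  have qn: "q < n" "q \<le> n" using s0 sn q_def by auto
  have d: "0 < q \<longrightarrow> u!(q-1) > u!q" using P q_def by (auto simp: Q_def)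
  have st: "sorted (drop q u)" unfolding sorted_drop_iff
  proof (intro allI impI)
    fix j assume j: "Suc j < length u - q"
    show "u!(q+j) \<le> u!Suc (q+j)"
    proof (rule ccontr)
      assume A: "\<not> u!(q+j) \<le> u!Suc (q+j)"
      have e: "n - (s - Suc j) - 1 = q + j" "n - (s - Suc j) = Suc (q+j)"
        using j n_def q_def sn by auto
      have "Q (s - Suc j)" using j n_def q_def sn A unfolding Q_def e by auto
      then have "s \<le> s - Suc j" unfolding s_def by (rule Least_le)
      then show False using j n_def q_def sn by auto
    qed
  qed
  let ?f = "\<lambda>k. sum_wr w (take k u) * sum_ah w (drop k u)"
  have "nc_mult (sum_wr w) (sum_ah w) u = (\<Sum>k\<le>n. ?f k)" by (simp add: nc_mult_def n_def)
  also have "\<dots> = (\<Sum>k\<in>{q..n}. ?f k)"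
  proof (rule sum.mono_neutral_right)
    show "\<forall>k\<in>{..n} - {q..n}. ?f k = 0"
    proof
      fix k assume k: "k \<in> {..n} - {q..n}"
      then have "k < q" by auto
      then have "u!(q-1) > u!q" using d by simp
      have "\<not> sorted (drop k u)"
      proof
        assume "sorted (drop k u)"
        moreover have "Suc (q-1-k) < length u - k" using \<open>k<q\<close> qn n_def by auto
        ultimately have "u!(k+(q-1-k)) \<le> u!Suc (k+(q-1-k))" unfolding sorted_drop_iff by blast
        moreover have "k+(q-1-k) = q-1" "Suc (k+(q-1-k)) = q" using \<open>k<q\<close> by auto
        ultimately show False using \<open>u!(q-1) > u!q\<close> by simp
      qed
      then show "?f k = 0" using k n_def by (simp add: sum_ah_drop)
    qed
  qed auto
  also have "\<dots> = (\<Sum>k\<in>{q..n}. sum_wr w (take q u) * (wz w (k-q) * a_coeff w (n-k)))"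
  proof (rule sum.cong[OF refl])
    fix k assume k: "k \<in> {q..n}"
    have "sorted (drop k u)" using st k
      by (metis atLeastAtMost_iff drop_drop le_add_diff_inverse2 sorted_wrt_drop)
    then show "?f k = sum_wr w (take q u) * (wz w (k-q) * a_coeff w (n-k))"
      using k n_def W_take_back[OF n_def[symmetric] qn(2) qn(1) st d, of k w]
      by (simp add: sum_ah_drop)
  qed
  also have "\<dots> = sum_wr w (take q u) * (\<Sum>k\<in>{q..n}. wz w (k-q) * a_coeff w (n-k))"
    by (simp add: sum_distrib_left)
  also have "(\<Sum>k\<in>{q..n}. wz w (k-q) * a_coeff w (n-k)) = (\<Sum>j\<le>s. wz w j * a_coeff w (s-j))"
  proof -
    have "{q..n} = {0+q..s+q}" using q_def sn by auto
    then have "(\<Sum>k\<in>{q..n}. wz w (k-q) * a_coeff w (n-k)) = (\<Sum>j\<in>{0..s}. wz w (j+q-q) * a_coeff w (n-(j+q)))"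
      by (simp only: sum.shift_bounds_cl_nat_ivl)
    also have "\<dots> = (\<Sum>j\<le>s. wz w j * a_coeff w (s-j))"
      using q_def sn by (simp add: atLeast0AtMost)
    finally show ?thesis .
  qed
  also have "\<dots> = 0" by (rule conv2[OF s0])
  finally show ?thesis using False by (simp add: nc_one_def)
qed

theorem theorem11:
  fixes w :: "nat \<Rightarrow> 'a::field_char_0"
  shows "nc_mult (sum_wr w) (sum_ah w) = nc_one \<and> nc_mult (sum_ah w) (sum_wr w) = nc_one"
  using AW WA by blast

end
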